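(* Let $\lambda\subset n\times n$ be a Young diagram with at least as many boxes above the main diagonal as below. Let $\lambda^c=\nu_1+\cdots+\nu_k$ be the hook decomposition of its complement, and for each $i$ let $\lambda_i$ be the complement in the $n\times n$ square of $\nu_i$ placed right-justified in the bottom right corner. Then for every face label $\mu$ of $G^{\text{co-rect}}_n$, i.e. every $\mu=(n^a,b^{n-a})$ with $0\le a,b\le n$, \[\mathrm{maxdiag}(\mu\setminus\lambda)=\sum_{i=1}^k\mathrm{maxdiag}(\mu\setminus\lambda_i).\]
   Context: Young diagrams are drawn in English notation inside the $n\times n$ square, top-left justified. The face labels of the co-rectangles plabic graph are the diagrams $(n^a,b^{n-a})$, $0\le a,b\le n$ (the diagrams whose complement in the square is a rectangle in the bottom right corner). Hook decomposition: the complement $\lambda^c$ of $\lambda$ in the square, rotated by $180^\circ$, is a Young diagram; $\lambda^c=\nu_1+\cdots+\nu_k$ is its decomposition into the hooks $\nu_i=(a_i,1^{b_i})$ with corners at its successive diagonal boxes (so $a_1>a_2>\cdots$, $b_1>b_2>\cdots$). Placing a hook $(a,1^b)$ right-justified in the bottom right corner means occupying the last $a$ boxes of the bottom row and the last $b+1$ boxes of the rightmost column. For a set $\nu$ of boxes of the square (e.g. the set difference $\mu\setminus\lambda$), $\mathrm{maxdiag}(\nu)$ is the maximum number of boxes of $\nu$ on a single diagonal of slope $-1$. *)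

theory Defs
  imports Main
begin

text \<open>Boxes of the n x n square are pairs (r,c) with r = row (0 = top),
  c = column (0 = left), 0 \<le> r,c < n (English notation).\<close>

definition square :: "nat \<Rightarrow> (nat \<times> nat) set" where
  "square n = {(r,c). r < n \<and> c < n}"

definition young_diagram :: "nat \<Rightarrow> (nat \<times> nat) set \<Rightarrow> bool" where
  "young_diagram n lam \<longleftrightarrow> lam \<subseteq> square n \<and>
     (\<forall>r c r' c'. (r,c) \<in> lam \<and> r' \<le> r \<and> c' \<le> c \<longrightarrow> (r',c') \<in> lam)"

definition boxes_above_diag :: "(nat \<times> nat) set \<Rightarrow> (nat \<times> nat) set" where
  "boxes_above_diag S = {(r,c) \<in> S. r < c}"

definition boxes_below_diag :: "(nat \<times> nat) set \<Rightarrow> (nat \<times> nat) set" where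
  "boxes_below_diag S = {(r,c) \<in> S. c < r}"

definition rot180 :: "nat \<Rightarrow> (nat \<times> nat) set \<Rightarrow> (nat \<times> nat) set" where
  "rot180 n S = (\<lambda>(r,c). (n - 1 - r, n - 1 - c)) ` S"

definition rotated_complement :: "nat \<Rightarrow> (nat \<times> nat) set \<Rightarrow> (nat \<times> nat) set" where
  "rotated_complement n lam = rot180 n (square n - lam)"

text \<open>Hook decomposition of a Young diagram rho: the i-th hook has its corner at the
  diagonal box (i,i); it is (a,1^b) with a = number of boxes of rho in row i from column i on
  (corner included), b = number of boxes of rho in column i strictly below row i.\<close>
definition durfee :: "(nat \<times> nat) set \<Rightarrow> nat" where
  "durfee rho = card {i. (i,i) \<in> rho}"

definition hook_arm :: "(nat \<times> nat) set \<Rightarrow> nat \<Rightarrow> nat" where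
  "hook_arm rho i = card {c. i \<le> c \<and> (i,c) \<in> rho}"

definition hook_leg :: "(nat \<times> nat) set \<Rightarrow> nat \<Rightarrow> nat" where
  "hook_leg rho i = card {r. i < r \<and> (r,i) \<in> rho}"

definition hook_decomposition :: "(nat \<times> nat) set \<Rightarrow> (nat \<times> nat) list" where
  "hook_decomposition rho = map (\<lambda>i. (hook_arm rho i, hook_leg rho i)) [0..<durfee rho]"

definition placed_hook :: "nat \<Rightarrow> nat \<Rightarrow> nat \<Rightarrow> (nat \<times> nat) set" where
  "placed_hook n a b = {(r,c). r = n - 1 \<and> n - a \<le> c \<and> c < n}
                     \<union> {(r,c). c = n - 1 \<and> n - 1 - b \<le> r \<and> r < n}"

definition hook_diagram :: "nat \<Rightarrow> nat \<times> nat \<Rightarrow> (nat \<times> nat) set" where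
  "hook_diagram n ab = square n - placed_hook n (fst ab) (snd ab)"

text \<open>Face labels of the co-rectangles plabic graph: (n^a, b^(n-a)).\<close>
definition corect_label :: "nat \<Rightarrow> nat \<Rightarrow> nat \<Rightarrow> (nat \<times> nat) set" where
  "corect_label n a b = {(r,c) \<in> square n. r < a \<or> c < b}"

text \<open>Diagonals of slope -1 are the sets c - r = const.  maxdiag S is the maximal number of
  boxes of S on one such diagonal (0 for the empty set).\<close>
definition diag_count :: "(nat \<times> nat) set \<Rightarrow> int \<Rightarrow> nat" where
  "diag_count S d = card {(r,c) \<in> S. int c - int r = d}"

definition maxdiag :: "(nat \<times> nat) set \<Rightarrow> nat" where
  "maxdiag S = Max (insert 0 (diag_count S ` {int c - int r | r c. (r,c) \<in> S}))"

end

theory Submission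
  imports Defs
begin


lemma fin_filter: "finite S \<Longrightarrow> finite {(r,c) \<in> S. P r c}"
proof -
  assume "finite S"
  moreover have "{(r,c) \<in> S. P r c} \<subseteq> S" by auto
  ultimately show ?thesis using finite_subset by blast
qed

lemma maxdiag_eqI:
  assumes "finite S" "\<And>d. diag_count S d \<le> M" "M = 0 \<or> (\<exists>d. diag_count S d = M)"
  shows "maxdiag S = M"
proof -
  let ?X = "{int c - int r | r c. (r,c) \<in> S}"
  have fX: "finite ?X"
  proof -
    have "?X = (\<lambda>(r,c). int c - int r) ` S" by force
    thus ?thesis using assms(1) by simp
  qed
  let ?Y = "insert 0 (diag_count S ` ?X)"
  have fY: "finite ?Y" using fX by simp
  have le: "Max ?Y \<le> M" using fY assms(2) by (simp add: Max_le_iff)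
  have ge: "M \<le> Max ?Y"
  proof (cases "M = 0")
    case True thus ?thesis by simp
  next
    case False
    then obtain d where d: "diag_count S d = M" using assms(3) by blast
    then have "{(r,c) \<in> S. int c - int r = d} \<noteq> {}" using False
      unfolding diag_count_def by (metis card.empty)
    then obtain r c where "(r,c) \<in> S" "int c - int r = d" by blast
    then have "d \<in> ?X" by blast
    then have "M \<in> ?Y" using d by blast
    thus ?thesis using fY by simp
  qed
  show ?thesis unfolding maxdiag_def using le ge by simp
qed

lemma down_closed_initial:
  fixes S :: "nat set"
  assumes "finite S" "\<And>i j. i \<in> S \<Longrightarrow> j \<le> i \<Longrightarrow> j \<in> S"
  shows "S = {..<card S}"
proof (cases "S = {}")
  case True thus ?thesis by simp
next
  case False
  let ?m = "Max S"
  have "S = {..?m}"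
  proof
    show "S \<subseteq> {..?m}" using assms(1) by auto
    show "{..?m} \<subseteq> S" using assms False Max_in by auto
  qed
  thus ?thesis by (metis card_lessThan lessThan_Suc_atMost)
qed

lemma hook_same_diag:
  assumes "(r,c) \<in> placed_hook n A B" "(r',c') \<in> placed_hook n A B" "int c - int r = int c' - int r'"
  shows "r = r' \<and> c = c'"
proof -
  have h1: "(r = n-1 \<and> c < n) \<or> (c = n-1 \<and> r < n)" using assms(1) unfolding placed_hook_def by auto
  have h2: "(r' = n-1 \<and> c' < n) \<or> (c' = n-1 \<and> r' < n)" using assms(2) unfolding placed_hook_def by auto
  from h1 h2 assms(3) show ?thesis by linarith
qed

lemma hook_maxdiag:
  assumes "T \<subseteq> placed_hook n A B"
  shows "maxdiag T = (if T = {} then 0 else 1)"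
proof -
  have fin: "finite T"
    by (rule finite_subset[OF assms]) (auto simp: placed_hook_def intro: finite_subset[of _ "{..<n} \<times> {..<n}"])
  have le1: "diag_count T d \<le> 1" for d
  proof -
    have "{(r,c) \<in> T. int c - int r = d} \<subseteq> T" by auto
    then have "finite {(r,c) \<in> T. int c - int r = d}" using fin finite_subset by blast
    moreover have "\<forall>x\<in>{(r,c) \<in> T. int c - int r = d}. \<forall>y\<in>{(r,c) \<in> T. int c - int r = d}. x = y"
    proof (intro ballI)
      fix x y assume "x \<in> {(r,c) \<in> T. int c - int r = d}" "y \<in> {(r,c) \<in> T. int c - int r = d}"
      then obtain r c r' c' where "x=(r,c)" "y=(r',c')" "(r,c)\<in>T" "(r',c')\<in>T"
        "int c - int r = d" "int c' - int r' = d" by auto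
      then show "x = y" using hook_same_diag[of r c n A B r' c'] assms by auto
    qed
    ultimately have "card {(r,c) \<in> T. int c - int r = d} \<le> Suc 0" by (subst card_le_Suc0_iff_eq)
    thus ?thesis unfolding diag_count_def by simp
  qed
  show ?thesis
  proof (cases "T = {}")
    case True thus ?thesis by (auto intro!: maxdiag_eqI simp: diag_count_def)
  next
    case False
    then obtain r c where rc: "(r,c) \<in> T" by auto
    have "diag_count T (int c - int r) \<ge> 1"
      unfolding diag_count_def using rc fin_filter[OF fin] by (auto simp: card_gt_0_iff Suc_le_eq)
    then have "diag_count T (int c - int r) = 1" using le1 by (meson le_antisym)
    thus ?thesis using False fin le1 by (auto intro!: maxdiag_eqI)
  qed
qed



lemma rc_mem:
  "(r,c) \<in> rotated_complement n lam \<longleftrightarrow> r < n \<and> c < n \<and> (n-1-r, n-1-c) \<notin> lam"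
proof
  assume "(r,c) \<in> rotated_complement n lam"
  then obtain x y where "x < n" "y < n" "(x,y) \<notin> lam" "r = n-1-x" "c = n-1-y"
    unfolding rotated_complement_def rot180_def square_def by auto
  moreover have "n-1-(n-1-x) = x" "n-1-(n-1-y) = y" using calculation by auto
  ultimately show "r < n \<and> c < n \<and> (n-1-r, n-1-c) \<notin> lam" by auto
next
  assume h: "r < n \<and> c < n \<and> (n-1-r, n-1-c) \<notin> lam"
  then have "(r,c) = (\<lambda>(r,c). (n - 1 - r, n - 1 - c)) (n-1-r, n-1-c)" by auto
  moreover have "(n-1-r, n-1-c) \<in> square n - lam" using h by (auto simp: square_def)
  ultimately show "(r,c) \<in> rotated_complement n lam"
    unfolding rotated_complement_def rot180_def by (rule image_eqI)
qed

lemma rc_young: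
  assumes "young_diagram n lam"
  shows "young_diagram n (rotated_complement n lam)"
  unfolding young_diagram_def
proof safe
  show "(r,c) \<in> square n" if "(r,c) \<in> rotated_complement n lam" for r c
    using that by (auto simp: rc_mem square_def)
next
  fix r c r' c' assume h: "(r,c) \<in> rotated_complement n lam" "r' \<le> r" "c' \<le> c"
  show "(r',c') \<in> rotated_complement n lam"
  proof -
    have "(n-1-r', n-1-c') \<notin> lam"
    proof
      assume "(n-1-r', n-1-c') \<in> lam"
      moreover have "n-1-r \<le> n-1-r'" "n-1-c \<le> n-1-c'" using h by auto
      ultimately have "(n-1-r, n-1-c) \<in> lam" using assms unfolding young_diagram_def by blast
      thus False using h by (auto simp: rc_mem)
    qed
    thus ?thesis using h by (auto simp: rc_mem)
  qed
qed

lemma yd_down: "young_diagram n rho \<Longrightarrow> (r,c) \<in> rho \<Longrightarrow> r' \<le> r \<Longrightarrow> c' \<le> c \<Longrightarrow> (r',c') \<in> rho"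
  unfolding young_diagram_def by blast

lemma yd_bound: "young_diagram n rho \<Longrightarrow> (r,c) \<in> rho \<Longrightarrow> r < n \<and> c < n"
  unfolding young_diagram_def square_def by blast

lemma yd_finite: "young_diagram n rho \<Longrightarrow> finite rho"
  unfolding young_diagram_def square_def
  by (rule finite_subset[of _ "{..<n} \<times> {..<n}"]) auto

lemma arm_iff:
  assumes "young_diagram n rho"
  shows "q < hook_arm rho i \<longleftrightarrow> (i, i+q) \<in> rho"
proof
  let ?S = "{c. i \<le> c \<and> (i,c) \<in> rho}"
  have "?S \<subseteq> {..<n}" using yd_bound[OF assms, of i] by auto
  then have fin: "finite ?S" using finite_subset by blast
  {
    assume "q < hook_arm rho i"
    show "(i, i+q) \<in> rho"
    proof (rule ccontr)
      assume nin: "(i, i+q) \<notin> rho"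
      have "?S \<subseteq> {i..<i+q}"
      proof
        fix c assume "c \<in> ?S"
        then have ic: "(i,c) \<in> rho" by simp
        have "c < i+q"
        proof (rule ccontr)
          assume "\<not> c < i+q"
          then have "(i,i+q) \<in> rho" using yd_down[OF assms ic, of i "i+q"] by simp
          with nin show False by simp
        qed
        thus "c \<in> {i..<i+q}" using \<open>c \<in> ?S\<close> by auto
      qed
      then have "card ?S \<le> card {i..<i+q}" by (intro card_mono) auto
      then have "card ?S \<le> q" by simp
      thus False using \<open>q < hook_arm rho i\<close> unfolding hook_arm_def by simp
    qed
  }
  {
    assume "(i, i+q) \<in> rho"
    then have "{i..i+q} \<subseteq> ?S" using yd_down[OF assms, of i "i+q"] by auto
    then have "card {i..i+q} \<le> card ?S" using fin card_mono by blast
    thus "q < hook_arm rho i" unfolding hook_arm_def by simp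
  }
qed

lemma leg_iff:
  assumes "young_diagram n rho" "(i,i) \<in> rho"
  shows "p \<le> hook_leg rho i \<longleftrightarrow> (i+p, i) \<in> rho"
proof
  let ?S = "{r. i < r \<and> (r,i) \<in> rho}"
  have "?S \<subseteq> {..<n}" using yd_bound[OF assms(1), of _ i] by auto
  then have fin: "finite ?S" using finite_subset by blast
  {
    assume "p \<le> hook_leg rho i"
    show "(i+p, i) \<in> rho"
    proof (rule ccontr)
      assume nin: "(i+p, i) \<notin> rho"
      then have "p > 0" using assms(2) by (cases p) auto
      have "?S \<subseteq> {i<..<i+p}"
      proof
        fix r assume "r \<in> ?S"
        then have ri: "(r,i) \<in> rho" by simp
        have "r < i+p"
        proof (rule ccontr)
          assume "\<not> r < i+p"
          then have "(i+p,i) \<in> rho" using yd_down[OF assms(1) ri, of "i+p" i] by simp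
          with nin show False by simp
        qed
        thus "r \<in> {i<..<i+p}" using \<open>r \<in> ?S\<close> by auto
      qed
      then have "card ?S \<le> card {i<..<i+p}" by (intro card_mono) auto
      then have "card ?S \<le> p - 1" by simp
      thus False using \<open>p \<le> hook_leg rho i\<close> \<open>p > 0\<close> unfolding hook_leg_def by simp
    qed
  }
  {
    assume "(i+p, i) \<in> rho"
    then have "{i<..i+p} \<subseteq> ?S" using yd_down[OF assms(1), of "i+p" i] by auto
    then have "card {i<..i+p} \<le> card ?S" using fin card_mono by blast
    thus "p \<le> hook_leg rho i" unfolding hook_leg_def by simp
  }
qed



lemma durfee_iff:
  assumes "young_diagram n rho"
  shows "i < durfee rho \<longleftrightarrow> (i,i) \<in> rho"
proof -
  let ?S = "{i. (i,i) \<in> rho}"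
  have "?S \<subseteq> {..<n}"
  proof
    fix x assume "x \<in> ?S"
    then have "(x,x) \<in> rho" by simp
    then show "x \<in> {..<n}" using yd_bound[OF assms, of x x] by simp
  qed
  then have fin: "finite ?S" using finite_subset by blast
  have eq: "?S = {..<card ?S}"
  proof (rule down_closed_initial[OF fin])
    fix i j assume "i \<in> ?S" "j \<le> i"
    then show "j \<in> ?S" using yd_down[OF assms, of i i j j] by simp
  qed
  have "(i \<in> ?S) = (i \<in> {..<card ?S})" by (rule arg_cong[OF eq])
  thus ?thesis unfolding durfee_def lessThan_iff mem_Collect_eq by simp
qed

lemma hook_nonempty:
  fixes A B n a b :: nat
  assumes "0 < A" "A \<le> n" "B < n" "a \<le> n" "b \<le> n"
  shows "(corect_label n a b \<inter> placed_hook n A B \<noteq> {}) \<longleftrightarrow> (n - b < A \<or> n - a \<le> B)"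
proof
  assume "corect_label n a b \<inter> placed_hook n A B \<noteq> {}"
  then obtain r c where rc: "r < n" "c < n" "r < a \<or> c < b"
     "(r = n-1 \<and> n-A \<le> c) \<or> (c = n-1 \<and> n-1-B \<le> r)"
    unfolding corect_label_def placed_hook_def square_def by blast
  then show "n - b < A \<or> n - a \<le> B" using assms by linarith
next
  assume h: "n - b < A \<or> n - a \<le> B"
  show "corect_label n a b \<inter> placed_hook n A B \<noteq> {}"
  proof (cases "n - b < A")
    case True
    then have "n - 1 < a \<or> n - A < b" "n - A < n" "n - 1 < n" using assms by linarith+
    then have "(n-1, n-A) \<in> corect_label n a b \<inter> placed_hook n A B"
      unfolding corect_label_def placed_hook_def square_def by simp
    thus ?thesis by blast
  next
    case False
    then have "n - a \<le> B" using h by simp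
    then have "n - 1 - B < a \<or> n - 1 < b" "n - 1 - B < n" "n - 1 < n" using assms by linarith+
    then have "(n-1-B, n-1) \<in> corect_label n a b \<inter> placed_hook n A B"
      unfolding corect_label_def placed_hook_def square_def by simp
    thus ?thesis by blast
  qed
qed

lemma hook_term:
  assumes yd: "young_diagram n rho" and ii: "(i,i) \<in> rho" and "a \<le> n" "b \<le> n"
  shows "maxdiag (corect_label n a b - hook_diagram n (hook_arm rho i, hook_leg rho i))
         = (if (i, i+(n-b)) \<in> rho \<or> (i+(n-a), i) \<in> rho then 1 else 0)"
proof -
  let ?A = "hook_arm rho i" and ?B = "hook_leg rho i"
  have eq: "corect_label n a b - hook_diagram n (?A, ?B) = corect_label n a b \<inter> placed_hook n ?A ?B"
    unfolding hook_diagram_def corect_label_def by auto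
  have A0: "0 < ?A" using arm_iff[OF yd, of 0 i] ii by simp
  have "(i, i+n) \<notin> rho" using yd_bound[OF yd, of i "i+n"] by auto
  then have An: "?A \<le> n" using arm_iff[OF yd, of n i] by simp
  have "(i+n, i) \<notin> rho" using yd_bound[OF yd, of "i+n" i] by auto
  then have Bn: "?B < n" using leg_iff[OF yd ii, of n] by simp
  have "maxdiag (corect_label n a b \<inter> placed_hook n ?A ?B)
     = (if corect_label n a b \<inter> placed_hook n ?A ?B = {} then 0 else 1)"
    by (rule hook_maxdiag) blast
  also have "\<dots> = (if n - b < ?A \<or> n - a \<le> ?B then 1 else 0)"
  proof -
    have ne: "(corect_label n a b \<inter> placed_hook n ?A ?B = {}) = (\<not> (n - b < ?A \<or> n - a \<le> ?B))"
      using hook_nonempty[OF A0 An Bn assms(3,4)] by blast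
    show ?thesis by (simp only: ne if_not_P) simp
  qed
  also have "\<dots> = (if (i, i+(n-b)) \<in> rho \<or> (i+(n-a), i) \<in> rho then 1 else 0)"
    using arm_iff[OF yd, of "n-b" i] leg_iff[OF yd ii, of "n-a"] by simp
  finally show ?thesis using eq by simp
qed



definition HH :: "(nat \<times> nat) set \<Rightarrow> nat \<Rightarrow> nat \<Rightarrow> nat set" where
  "HH rho p q = {i. (i,i) \<in> rho \<and> ((i,i+q) \<in> rho \<or> (i+p,i) \<in> rho)}"

definition RR :: "nat \<Rightarrow> nat \<Rightarrow> (nat \<times> nat) set" where
  "RR p q = {(r,c). r < p \<and> c < q}"

lemma posdiag:
  assumes yd: "young_diagram n rho" and m: "(r, r+j) \<in> rho" and nr: "\<not> (r < p \<and> r+j < q)"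
  shows "min p (q-j) \<le> r \<and> (r - min p (q-j)) \<in> HH rho p q"
proof (cases "p \<le> q - j")
  case True
  then have s: "min p (q-j) = p" by simp
  have "p \<le> r" using True nr by linarith
  have "(r-p, r-p) \<in> rho" using yd_down[OF yd m, of "r-p" "r-p"] by simp
  moreover have "(r-p+p, r-p) \<in> rho" using yd_down[OF yd m, of "r-p+p" "r-p"] \<open>p \<le> r\<close> by simp
  ultimately show ?thesis using s \<open>p \<le> r\<close> unfolding HH_def by simp
next
  case False
  then have s: "min p (q-j) = q-j" by simp
  have le: "q - j \<le> r" using False nr by linarith
  let ?i = "r - (q-j)"
  have "(?i, ?i) \<in> rho" using yd_down[OF yd m, of ?i ?i] by simp
  moreover have "(?i, ?i+q) \<in> rho" using yd_down[OF yd m, of ?i "?i+q"] le by simp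
  ultimately show ?thesis using s le unfolding HH_def by simp
qed

lemma negdiag:
  assumes yd: "young_diagram n rho" and m: "(c+j, c) \<in> rho" and nr: "\<not> (c+j < p \<and> c < q)"
  shows "min q (p-j) \<le> c \<and> (c - min q (p-j)) \<in> HH rho p q"
proof (cases "q \<le> p - j")
  case True
  then have s: "min q (p-j) = q" by simp
  have "q \<le> c" using True nr by linarith
  have "(c-q, c-q) \<in> rho" using yd_down[OF yd m, of "c-q" "c-q"] by simp
  moreover have "(c-q, c-q+q) \<in> rho" using yd_down[OF yd m, of "c-q" "c-q+q"] \<open>q \<le> c\<close> by simp
  ultimately show ?thesis using s \<open>q \<le> c\<close> unfolding HH_def by simp
next
  case False
  then have s: "min q (p-j) = p-j" by simp
  have le: "p - j \<le> c" using False nr by linarith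
  let ?i = "c - (p-j)"
  have "(?i, ?i) \<in> rho" using yd_down[OF yd m, of ?i ?i] by simp
  moreover have "(?i+p, ?i) \<in> rho" using yd_down[OF yd m, of "?i+p" ?i] le by simp
  ultimately show ?thesis using s le unfolding HH_def by simp
qed

lemma HH_finite:
  assumes yd: "young_diagram n rho"
  shows "finite (HH rho p q)"
proof -
  have "HH rho p q \<subseteq> {..<n}"
  proof
    fix x assume "x \<in> HH rho p q"
    then have "(x,x) \<in> rho" unfolding HH_def by simp
    then show "x \<in> {..<n}" using yd_bound[OF yd, of x x] by simp
  qed
  thus ?thesis using finite_subset by blast
qed

lemma diag_le:
  assumes yd: "young_diagram n rho"
  shows "diag_count (rho - RR p q) k \<le> card (HH rho p q)"
proof -
  let ?T = "{(r,c) \<in> rho - RR p q. int c - int r = k}"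
  have "\<exists>s. \<forall>r c. (r,c) \<in> ?T \<longrightarrow> s \<le> min r c \<and> min r c - s \<in> HH rho p q"
  proof (cases "k \<ge> 0")
    case True
    define j where "j = nat k"
    show ?thesis
    proof (intro exI allI impI)
      fix r c assume "(r,c) \<in> ?T"
      then have rc: "(r,c) \<in> rho" "\<not> (r < p \<and> c < q)" "int c - int r = k"
        unfolding RR_def by auto
      have "int c = int (r + j)" using True rc(3) unfolding j_def by simp
      then have c: "c = r + j" by (simp only: of_nat_eq_iff)
      have m: "(r, r+j) \<in> rho" and nr: "\<not> (r < p \<and> r+j < q)" using rc c by auto
      have "min r c = r" using c by simp
      then show "min p (q-j) \<le> min r c \<and> min r c - min p (q-j) \<in> HH rho p q"
        using posdiag[OF yd m nr] by simp
    qed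
  next
    case False
    define j where "j = nat (-k)"
    show ?thesis
    proof (intro exI allI impI)
      fix r c assume "(r,c) \<in> ?T"
      then have rc: "(r,c) \<in> rho" "\<not> (r < p \<and> c < q)" "int c - int r = k"
        unfolding RR_def by auto
      have "int r = int (c + j)" using False rc(3) unfolding j_def by simp
      then have c: "r = c + j" by (simp only: of_nat_eq_iff)
      have m: "(c+j, c) \<in> rho" and nr: "\<not> (c+j < p \<and> c < q)" using rc c by auto
      have "min r c = c" using c by simp
      then show "min q (p-j) \<le> min r c \<and> min r c - min q (p-j) \<in> HH rho p q"
        using negdiag[OF yd m nr] by simp
    qed
  qed
  then obtain s where s: "\<And>r c. (r,c) \<in> ?T \<Longrightarrow> s \<le> min r c \<and> min r c - s \<in> HH rho p q"
    by blast
  let ?f = "\<lambda>(r,c). min r c - s"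
  have inj: "inj_on ?f ?T"
  proof (rule inj_onI)
    fix x y assume x: "x \<in> ?T" and y: "y \<in> ?T" and e: "?f x = ?f y"
    obtain r c where xr: "x = (r,c)" by (cases x)
    obtain r' c' where yr: "y = (r',c')" by (cases y)
    have d: "int c - int r = int c' - int r'" using x y xr yr by simp
    have s1: "s \<le> min r c" "s \<le> min r' c'" using s x y xr yr by auto
    have "min r c - s = min r' c' - s" using e xr yr by simp
    then have "min r c = min r' c'" using eq_diff_iff[OF s1] by simp
    then show "x = y" using d xr yr by (simp add: min_def split: if_splits)
  qed
  have img: "?f ` ?T \<subseteq> HH rho p q" using s by auto
  have "card ?T \<le> card (HH rho p q)" by (rule card_inj_on_le[OF inj img HH_finite[OF yd]])
  thus ?thesis unfolding diag_count_def .
qed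

lemma diag_eq:
  assumes yd: "young_diagram n rho"
  shows "\<exists>k. diag_count (rho - RR p q) k = card (HH rho p q)"
proof -
  let ?H1 = "{i. (i,i+q) \<in> rho}" and ?H2 = "{i. (i+p,i) \<in> rho}"
  have H1d: "\<And>i. (i,i+q) \<in> rho \<Longrightarrow> (i,i) \<in> rho" using yd_down[OF yd] by simp
  have H2d: "\<And>i. (i+p,i) \<in> rho \<Longrightarrow> (i,i) \<in> rho" using yd_down[OF yd] by simp
  have HU: "HH rho p q = ?H1 \<union> ?H2" unfolding HH_def using H1d H2d by auto
  have dc1: "\<And>i j. i \<in> ?H1 \<Longrightarrow> j \<le> i \<Longrightarrow> j \<in> ?H1" using yd_down[OF yd] by simp
  have dc2: "\<And>i j. i \<in> ?H2 \<Longrightarrow> j \<le> i \<Longrightarrow> j \<in> ?H2" using yd_down[OF yd] by simp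
  have cmp: "?H1 \<subseteq> ?H2 \<or> ?H2 \<subseteq> ?H1"
  proof (rule ccontr)
    assume "\<not> (?H1 \<subseteq> ?H2 \<or> ?H2 \<subseteq> ?H1)"
    then obtain x y where x: "x \<in> ?H1" "x \<notin> ?H2" and y: "y \<in> ?H2" "y \<notin> ?H1" by blast
    show False
    proof (cases "x \<le> y")
      case True then show False using dc1[OF x(1)] dc2[OF y(1)] x y by blast
    next
      case False then show False using dc1[OF x(1)] dc2[OF y(1)] x y by simp
    qed
  qed
  show ?thesis
  proof (cases "?H2 \<subseteq> ?H1")
    case True
    then have H: "HH rho p q = ?H1" using HU by blast
    have T: "{(r,c) \<in> rho - RR p q. int c - int r = int q} = (\<lambda>i. (i, i+q)) ` ?H1"
    proof
      show "{(r,c) \<in> rho - RR p q. int c - int r = int q} \<subseteq> (\<lambda>i. (i, i+q)) ` ?H1"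
      proof
        fix x assume "x \<in> {(r,c) \<in> rho - RR p q. int c - int r = int q}"
        then obtain r c where "x = (r,c)" "(r,c) \<in> rho" "int c - int r = int q" by auto
        then have "int c = int (r + q)" by simp
        then have "c = r + q" by (simp only: of_nat_eq_iff)
        then have "x = (r, r+q)" "(r, r+q) \<in> rho" using \<open>x = (r,c)\<close> \<open>(r,c) \<in> rho\<close> by auto
        then show "x \<in> (\<lambda>i. (i, i+q)) ` ?H1" by auto
      qed
      show "(\<lambda>i. (i, i+q)) ` ?H1 \<subseteq> {(r,c) \<in> rho - RR p q. int c - int r = int q}"
        unfolding RR_def by auto
    qed
    have "inj_on (\<lambda>i. (i, i+q)) ?H1" by (rule inj_onI) simp
    then have "diag_count (rho - RR p q) (int q) = card ?H1"
      unfolding diag_count_def T by (rule card_image)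
    thus ?thesis using H by auto
  next
    case False
    then have "?H1 \<subseteq> ?H2" using cmp by blast
    then have H: "HH rho p q = ?H2" using HU by blast
    have T: "{(r,c) \<in> rho - RR p q. int c - int r = - int p} = (\<lambda>i. (i+p, i)) ` ?H2"
    proof
      show "{(r,c) \<in> rho - RR p q. int c - int r = - int p} \<subseteq> (\<lambda>i. (i+p, i)) ` ?H2"
      proof
        fix x assume "x \<in> {(r,c) \<in> rho - RR p q. int c - int r = - int p}"
        then obtain r c where "x = (r,c)" "(r,c) \<in> rho" "int c - int r = - int p" by auto
        then have "int r = int (c + p)" by simp
        then have "r = c + p" by (simp only: of_nat_eq_iff)
        then have "x = (c+p, c)" "(c+p, c) \<in> rho" using \<open>x = (r,c)\<close> \<open>(r,c) \<in> rho\<close> by auto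
        then show "x \<in> (\<lambda>i. (i+p, i)) ` ?H2" by auto
      qed
      show "(\<lambda>i. (i+p, i)) ` ?H2 \<subseteq> {(r,c) \<in> rho - RR p q. int c - int r = - int p}"
        unfolding RR_def by auto
    qed
    have "inj_on (\<lambda>i. (i+p, i)) ?H2" by (rule inj_onI) simp
    then have "diag_count (rho - RR p q) (- int p) = card ?H2"
      unfolding diag_count_def T by (rule card_image)
    thus ?thesis using H by auto
  qed
qed



lemma rot_count:
  assumes "a \<le> n" "b \<le> n"
  shows "diag_count (corect_label n a b - lam) k
       = diag_count (rotated_complement n lam - RR (n-a) (n-b)) (-k)"
proof -
  let ?A = "{(r,c) \<in> corect_label n a b - lam. int c - int r = k}"
  let ?B = "{(r,c) \<in> rotated_complement n lam - RR (n-a) (n-b). int c - int r = -k}"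
  let ?g = "\<lambda>(r,c). (n-1-r, n-1-c) :: nat \<times> nat"
  have Amem: "(r,c) \<in> ?A \<longleftrightarrow> r < n \<and> c < n \<and> (r < a \<or> c < b) \<and> (r,c) \<notin> lam \<and> int c - int r = k" for r c
    unfolding corect_label_def square_def by auto
  have Bmem: "(r,c) \<in> ?B \<longleftrightarrow> r < n \<and> c < n \<and> (n-1-r, n-1-c) \<notin> lam \<and> \<not> (r < n-a \<and> c < n-b)
      \<and> int c - int r = -k" for r c
    unfolding RR_def using rc_mem[of r c n lam] by auto
  have inj: "inj_on ?g ?A"
  proof (rule inj_onI)
    fix x y assume "x \<in> ?A" "y \<in> ?A" "?g x = ?g y"
    then show "x = y" unfolding corect_label_def square_def by auto
  qed
  have "?B = ?g ` ?A"
  proof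
    show "?B \<subseteq> ?g ` ?A"
    proof
      fix x assume "x \<in> ?B"
      then obtain r c where x: "x = (r,c)" and "(r,c) \<in> ?B" by (cases x) auto
      then have h: "r < n" "c < n" "(n-1-r, n-1-c) \<notin> lam" "\<not> (r < n-a \<and> c < n-b)"
        "int c - int r = -k" using Bmem by auto
      have "int (n-1-c) - int (n-1-r) = k" using h(1,2,5) by (simp add: of_nat_diff)
      moreover have "n-1-r < a \<or> n-1-c < b" using h(1,2,4) assms by linarith
      ultimately have "(n-1-r, n-1-c) \<in> ?A" using Amem h by auto
      moreover have "x = ?g (n-1-r, n-1-c)" using x h(1,2) by auto
      ultimately show "x \<in> ?g ` ?A" by blast
    qed
    show "?g ` ?A \<subseteq> ?B"
    proof
      fix x assume "x \<in> ?g ` ?A"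
      then obtain r c where x: "x = ?g (r,c)" and "(r,c) \<in> ?A" by auto
      then have h: "r < n" "c < n" "r < a \<or> c < b" "(r,c) \<notin> lam" "int c - int r = k"
        using Amem by auto
      have e: "n-1-(n-1-r) = r" "n-1-(n-1-c) = c" using h(1,2) by auto
      have "int (n-1-c) - int (n-1-r) = -k" using h(1,2,5) by (simp add: of_nat_diff)
      moreover have "\<not> (n-1-r < n-a \<and> n-1-c < n-b)" using h(1,2,3) assms by linarith
      moreover have "n-1-r < n" "n-1-c < n" using h(1,2) by auto
      ultimately have "(n-1-r, n-1-c) \<in> ?B" using Bmem h(4) e by simp
      thus "x \<in> ?B" using x by simp
    qed
  qed
  then have "card ?B = card ?A" using card_image[OF inj] by simp
  thus ?thesis unfolding diag_count_def by simp
qed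



theorem mainTheorem12:
  fixes n a b :: nat and lam :: "(nat \<times> nat) set"
  assumes "young_diagram n lam"
    and "card (boxes_below_diag lam) \<le> card (boxes_above_diag lam)"
    and "a \<le> n" and "b \<le> n"
  shows "maxdiag (corect_label n a b - lam)
       = (\<Sum>ab \<leftarrow> hook_decomposition (rotated_complement n lam).
            maxdiag (corect_label n a b - hook_diagram n ab))"
proof -
  define rho where "rho = rotated_complement n lam"
  have yd: "young_diagram n rho" unfolding rho_def by (rule rc_young[OF assms(1)])
  define H where "H = HH rho (n-a) (n-b)"
  define P where "P = (\<lambda>i. (i, i+(n-b)) \<in> rho \<or> (i+(n-a), i) \<in> rho)"
  define d where "d = durfee rho"
  have L: "maxdiag (corect_label n a b - lam) = card H"
  proof (rule maxdiag_eqI)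
    have "corect_label n a b - lam \<subseteq> {..<n} \<times> {..<n}"
      unfolding corect_label_def square_def by auto
    thus "finite (corect_label n a b - lam)" using finite_subset by blast
    show "diag_count (corect_label n a b - lam) k \<le> card H" for k
      using rot_count[OF assms(3,4), of lam k] diag_le[OF yd, of "n-a" "n-b" "-k"]
      unfolding H_def rho_def by simp
    obtain k0 where k0: "diag_count (rho - RR (n-a) (n-b)) k0 = card H"
      using diag_eq[OF yd, of "n-a" "n-b"] unfolding H_def by blast
    have "diag_count (corect_label n a b - lam) (-k0) = card H"
      using rot_count[OF assms(3,4), of lam "-k0"] k0 unfolding rho_def by simp
    thus "card H = 0 \<or> (\<exists>k. diag_count (corect_label n a b - lam) k = card H)" by blast
  qed
  have "(\<Sum>ab \<leftarrow> hook_decomposition rho. maxdiag (corect_label n a b - hook_diagram n ab))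
      = (\<Sum>i \<leftarrow> [0..<d]. maxdiag (corect_label n a b - hook_diagram n (hook_arm rho i, hook_leg rho i)))"
    unfolding hook_decomposition_def d_def by (simp add: comp_def)
  also have "\<dots> = (\<Sum>i \<in> {0..<d}. maxdiag (corect_label n a b - hook_diagram n (hook_arm rho i, hook_leg rho i)))"
    by (simp add: interv_sum_list_conv_sum_set_nat)
  also have "\<dots> = (\<Sum>i \<in> {0..<d}. if P i then 1 else 0)"
  proof (rule sum.cong)
    fix i assume "i \<in> {0..<d}"
    then have "(i,i) \<in> rho" using durfee_iff[OF yd] unfolding d_def by simp
    then show "maxdiag (corect_label n a b - hook_diagram n (hook_arm rho i, hook_leg rho i))
       = (if P i then 1 else 0)" using hook_term[OF yd _ assms(3,4)] unfolding P_def by simp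
  qed simp
  also have "\<dots> = card {i \<in> {0..<d}. P i}"
    using sum.inter_filter[of "{0..<d}" "\<lambda>_. 1::nat" P] by simp
  also have "{i \<in> {0..<d}. P i} = H"
    unfolding H_def HH_def P_def d_def using durfee_iff[OF yd] by auto
  finally show ?thesis using L unfolding rho_def by simp
qed

end
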